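(* Let ${\bm G}$ be a random matrix in $\mathbb{R}^{m\times n}$ with $\mathbb{E}[{\bm G}]={\bm M}$ and $\mathbb{E}[\|{\bm G}-{\bm M}\|_F^\alpha]\le\sigma^\alpha$ for some $\alpha\in(1,2]$ and $\sigma>0$, and let $\tau>0$, $d=\min\{m,n\}$. Then $$\mathbb{E}\big[\|\mathcal{C}_\tau({\bm G})\|_F^2\big]\le 2\|{\bm M}\|_F^2+2^{4-\alpha}d^{1-\alpha/2}\tau^{2-\alpha}\sigma^\alpha.$$ (In the paper this is applied conditionally on ${\bm X}_k$ with ${\bm G}={\bm G}_k$ and ${\bm M}=\nabla f({\bm X}_k)$.)
   Context: $\|\cdot\|_F$ is the Frobenius norm. Spectral clipping: for ${\bm G}\in\mathbb{R}^{m\times n}$ with (thin) SVD ${\bm G}={\bm U}\,\mathrm{diag}(\sigma_1,\dots,\sigma_d){\bm V}^\top$, $d=\min\{m,n\}$, and threshold $\tau>0$, define $\mathcal{C}_\tau({\bm G}):={\bm U}\,\mathrm{diag}(\min\{\sigma_1,\tau\},\dots,\min\{\sigma_d,\tau\}){\bm V}^\top$. *)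

theory Defs
  imports "HOL-Probability.Probability"
begin

text \<open>Matrices in R^{m x n} are represented as elements of real^'n^'m
  (rows indexed by 'm, columns by 'n).\<close>

definition frob_norm :: "real^'n::finite^'m::finite \<Rightarrow> real" where
  "frob_norm A = sqrt (\<Sum>i\<in>UNIV. \<Sum>j\<in>UNIV. (A $ i $ j)^2)"

definition outer_prod :: "real^'m::finite \<Rightarrow> real^'n::finite \<Rightarrow> real^'n^'m" where
  "outer_prod u v = (\<chi> i j. u $ i * v $ j)"

definition min_dim :: "real^'n::finite^'m::finite \<Rightarrow> nat" where
  "min_dim (A :: real^'n^'m) = min CARD('m) CARD('n)"

text \<open>Thin SVD G = U diag(s_1..s_d) V^T written in outer-product form:
  u_1..u_d orthonormal in R^m (columns of U), v_1..v_d orthonormal in R^n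
  (columns of V), s_1 >= ... >= s_d >= 0, d = min(m,n).\<close>
definition is_thin_svd ::
  "real^'n::finite^'m::finite \<Rightarrow> (nat \<Rightarrow> real) \<Rightarrow> (nat \<Rightarrow> real^'m) \<Rightarrow> (nat \<Rightarrow> real^'n) \<Rightarrow> bool" where
  "is_thin_svd G s u v \<longleftrightarrow>
     (\<forall>k<min_dim G. 0 \<le> s k) \<and>
     (\<forall>k. Suc k < min_dim G \<longrightarrow> s (Suc k) \<le> s k) \<and>
     (\<forall>k<min_dim G. \<forall>l<min_dim G. u k \<bullet> u l = (if k = l then 1 else 0)) \<and>
     (\<forall>k<min_dim G. \<forall>l<min_dim G. v k \<bullet> v l = (if k = l then 1 else 0)) \<and>
     G = (\<Sum>k<min_dim G. s k *\<^sub>R outer_prod (u k) (v k))"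

definition spec_clip :: "real \<Rightarrow> real^'n::finite^'m::finite \<Rightarrow> real^'n^'m" where
  "spec_clip \<tau> G = (SOME C. \<exists>s u v. is_thin_svd G s u v \<and>
       C = (\<Sum>k<min_dim G. min (s k) \<tau> *\<^sub>R outer_prod (u k) (v k)))"

end

theory Submission imports Defs
begin

definition orthonormal_upto :: "nat \<Rightarrow> (nat \<Rightarrow> 'a::real_inner) \<Rightarrow> bool" where
  "orthonormal_upto d w \<longleftrightarrow> (\<forall>k<d. \<forall>l<d. w k \<bullet> w l = (if k = l then 1 else 0))"

lemma on_inner_sum:
  assumes "orthonormal_upto d w"
  shows "(\<Sum>k<d. a k *\<^sub>R w k) \<bullet> (\<Sum>k<d. b k *\<^sub>R w k) = (\<Sum>k<d. a k * b k)"
proof -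
  have "(\<Sum>k<d. a k *\<^sub>R w k) \<bullet> (\<Sum>k<d. b k *\<^sub>R w k) = (\<Sum>l<d. b l * (\<Sum>k<d. a k * (w k \<bullet> w l)))"
    unfolding inner_sum_left inner_sum_right inner_scaleR_left inner_scaleR_right by (simp add: mult_ac)
  also have "\<dots> = (\<Sum>l<d. b l * (\<Sum>k<d. if k = l then a l else 0))"
    using assms unfolding orthonormal_upto_def by (intro sum.cong refl arg_cong2[where f="(*)"]) auto
  also have "\<dots> = (\<Sum>k<d. a k * b k)" by (simp add: mult.commute)
  finally show ?thesis .
qed

lemma on_inner_sum_vec:
  assumes "orthonormal_upto d w"
  shows "x \<bullet> (\<Sum>k<d. b k *\<^sub>R w k) = (\<Sum>k<d. b k * (x \<bullet> w k))"
  by (simp add: inner_sum_right)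

lemma on_bessel:
  assumes "orthonormal_upto d w"
  shows "(\<Sum>k<d. (x \<bullet> w k)^2) \<le> (norm x)^2"
proof -
  define y where "y = (\<Sum>k<d. (x \<bullet> w k) *\<^sub>R w k)"
  have yy: "y \<bullet> y = (\<Sum>k<d. (x \<bullet> w k)^2)"
    unfolding y_def using on_inner_sum[OF assms] by (simp add: power2_eq_square)
  have xy: "x \<bullet> y = (\<Sum>k<d. (x \<bullet> w k)^2)"
    unfolding y_def by (simp add: inner_sum_right power2_eq_square)
  have "0 \<le> (x - y) \<bullet> (x - y)" by simp
  also have "\<dots> = x \<bullet> x - 2 * (x \<bullet> y) + y \<bullet> y"
    by (simp add: inner_diff_left inner_diff_right inner_commute)
  finally show ?thesis using xy yy by (simp add: power2_norm_eq_inner)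
qed

lemma on_inj:
  assumes "orthonormal_upto d w"
  shows "inj_on w {..<d}"
  using assms unfolding orthonormal_upto_def inj_on_def
  by (metis lessThan_iff zero_neq_one)

lemma on_complete:
  fixes w :: "nat \<Rightarrow> 'a::euclidean_space"
  assumes "orthonormal_upto d w" "d = DIM('a)" "\<forall>k<d. y \<bullet> w k = 0"
  shows "y = 0"
proof (rule ccontr)
  assume y: "y \<noteq> 0"
  let ?E = "insert y (w ` {..<d})"
  have ny: "y \<notin> w ` {..<d}"
  proof
    assume "y \<in> w ` {..<d}"
    then obtain k where "k < d" "y = w k" by auto
    with assms(1,3) show False unfolding orthonormal_upto_def by auto
  qed
  have "pairwise orthogonal ?E"
    using assms(1,3) unfolding pairwise_def orthogonal_def orthonormal_upto_def
    by (auto simp: inner_commute)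
  moreover have "0 \<notin> ?E"
    using y assms(1) unfolding orthonormal_upto_def by force
  ultimately have "independent ?E" by (rule pairwise_orthogonal_independent)
  then have "card ?E \<le> DIM('a)" using independent_bound by blast
  moreover have "card ?E = d + 1"
    using ny on_inj[OF assms(1)] by (simp add: card_image)
  ultimately show False using assms(2) by simp
qed

lemma on_extend:
  fixes w :: "nat \<Rightarrow> 'a::euclidean_space"
  assumes "d < DIM('a)"
  obtains x where "norm x = 1" "\<forall>k<d. x \<bullet> w k = 0"
proof -
  have "dim (w ` {..<d}) \<le> card (w ` {..<d})"
    by (rule dim_le_card) (auto intro: span_base)
  also have "\<dots> \<le> d" using card_image_le[of "{..<d}" w] by simp
  finally have dl: "dim (w ` {..<d}) < DIM('a)" using assms by simp
  obtain x where x: "x \<noteq> 0" "\<And>y. y \<in> span (w ` {..<d}) \<Longrightarrow> orthogonal x y"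
    using orthogonal_to_subspace_exists[OF dl] by blast
  have "norm (x /\<^sub>R norm x) = 1" using x by simp
  moreover have "\<forall>k<d. (x /\<^sub>R norm x) \<bullet> w k = 0"
    using x(2) by (auto simp: orthogonal_def intro: span_base)
  ultimately show ?thesis using that by blast
qed

lemma on_Suc:
  assumes "orthonormal_upto k w" "norm x = 1" "\<forall>j<k. x \<bullet> w j = 0"
  shows "orthonormal_upto (Suc k) (w(k := x))"
proof -
  have xx: "x \<bullet> x = 1" using assms(2) by (metis norm_eq_1)
  show ?thesis using assms(1,3) xx unfolding orthonormal_upto_def
    by (auto simp: less_Suc_eq inner_commute)
qed

lemma quad_zero:
  fixes a c :: real
  assumes "\<forall>t. 2*t*a \<le> t^2 * c"
  shows "a = 0"
proof (rule ccontr)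
  assume a: "a \<noteq> 0"
  define p where "p = \<bar>c\<bar> + 1"
  define t where "t = a / p"
  have pos: "p > 0" unfolding p_def by simp
  have "2*t*a \<le> t^2 * c" using assms by blast
  also have "\<dots> \<le> t^2 * \<bar>c\<bar>" by (simp add: mult_left_mono)
  also have "\<dots> = a^2 * \<bar>c\<bar> / p^2" unfolding t_def by (simp add: power_divide)
  also have "\<dots> \<le> a^2 * p / p^2" using pos unfolding p_def
    by (intro divide_right_mono mult_left_mono) auto
  also have "\<dots> = a^2 / p" using pos by (simp add: power2_eq_square)
  finally have "2 * (a^2 / p) \<le> a^2 / p" unfolding t_def by (simp add: power2_eq_square)
  moreover have "a^2 / p > 0" using a pos by simp
  ultimately show False by linarith
qed

definition svd_inv :: "('a::euclidean_space \<Rightarrow> 'b::euclidean_space) \<Rightarrow> nat \<Rightarrow> (nat \<Rightarrow> real) \<Rightarrow> (nat \<Rightarrow> 'b) \<Rightarrow> (nat \<Rightarrow> 'a) \<Rightarrow> bool" where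
  "svd_inv f k s u v \<longleftrightarrow> orthonormal_upto k v \<and> orthonormal_upto k u \<and> (\<forall>i<k. 0 \<le> s i) \<and>
     (\<forall>i. Suc i < k \<longrightarrow> s (Suc i) \<le> s i) \<and> (\<forall>i<k. f (v i) = s i *\<^sub>R u i) \<and>
     (\<forall>i<k. \<forall>x. (\<forall>j<i. x \<bullet> v j = 0) \<longrightarrow> norm (f x) \<le> s i * norm x) \<and>
     (\<forall>i<k. \<forall>x. (\<forall>j\<le>i. x \<bullet> v j = 0) \<longrightarrow> u i \<bullet> f x = 0)"

lemma svd_build:
  fixes f :: "'a::euclidean_space \<Rightarrow> 'b::euclidean_space"
  assumes lin: "linear f"
  shows "k \<le> min DIM('a) DIM('b) \<Longrightarrow> \<exists>s u v. svd_inv f k s u v"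
proof (induction k)
  case 0
  show ?case unfolding svd_inv_def orthonormal_upto_def by auto
next
  case (Suc k)
  then obtain s u v where inv: "svd_inv f k s u v" by auto
  note I = inv[unfolded svd_inv_def]
  have kA: "k < DIM('a)" and kB: "k < DIM('b)" using Suc.prems by auto
  define S where "S = sphere (0::'a) 1 \<inter> (\<Inter>j<k. {x. v j \<bullet> x = 0})"
  have "compact S" unfolding S_def
    by (intro compact_Int_closed compact_sphere closed_INT ballI closed_hyperplane) 
  moreover have "S \<noteq> {}"
  proof -
    obtain x where "norm x = 1" "\<forall>j<k. x \<bullet> v j = 0" using on_extend[OF kA] by blast
    then have "x \<in> S" unfolding S_def by (auto simp: inner_commute)
    then show ?thesis by auto
  qed
  moreover have "continuous_on S (\<lambda>x. norm (f x))"
    using lin linear_conv_bounded_linear by (intro continuous_on_norm linear_continuous_on) blast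
  ultimately obtain vk where vkS: "vk \<in> S" and vkmax: "\<And>y. y \<in> S \<Longrightarrow> norm (f y) \<le> norm (f vk)"
    using continuous_attains_sup[of S "\<lambda>x. norm (f x)"] by blast
  define sk where "sk = norm (f vk)"
  have nvk: "norm vk = 1" and ovk: "\<forall>j<k. vk \<bullet> v j = 0"
    using vkS unfolding S_def by (auto simp: inner_commute)
  have I2k: "norm (f x) \<le> sk * norm x" if "\<forall>j<k. x \<bullet> v j = 0" for x
  proof (cases "x = 0")
    case True then show ?thesis using lin by (simp add: linear_0)
  next
    case False
    have "x /\<^sub>R norm x \<in> S" using False that unfolding S_def by (auto simp: inner_commute)
    then have "norm (f (x /\<^sub>R norm x)) \<le> sk" unfolding sk_def by (rule vkmax)
    moreover have "f (x /\<^sub>R norm x) = f x /\<^sub>R norm x" using lin by (simp add: linear_scale)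
    ultimately show ?thesis using False by (simp add: divide_simps mult.commute)
  qed
  have FO: "f vk \<bullet> f w = 0" if w: "\<forall>j<k. w \<bullet> v j = 0" and wvk: "w \<bullet> vk = 0" for w
  proof -
    have "2*t*(f vk \<bullet> f w) \<le> t^2 * (sk^2 * (norm w)^2 - (norm (f w))^2)" for t
    proof -
      define y where "y = vk + t *\<^sub>R w"
      have "\<forall>j<k. y \<bullet> v j = 0" using ovk w unfolding y_def by (simp add: inner_add_left)
      then have "norm (f y) \<le> sk * norm y" by (rule I2k)
      then have "(norm (f y))^2 \<le> (sk * norm y)^2" by (simp add: power_mono)
      moreover have "(norm y)^2 = 1 + t^2 * (norm w)^2"
        unfolding y_def power2_norm_eq_inner using nvk wvk
        by (simp add: inner_add_left inner_add_right inner_commute power2_eq_square norm_eq_1[symmetric])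
      moreover have "f y = f vk + t *\<^sub>R f w" unfolding y_def using lin by (simp add: linear_add linear_scale)
      then have "(norm (f y))^2 = sk^2 + 2*t*(f vk \<bullet> f w) + t^2 * (norm (f w))^2"
        unfolding sk_def power2_norm_eq_inner
        by (simp add: inner_add_left inner_add_right inner_commute power2_eq_square algebra_simps)
      ultimately show ?thesis by (simp add: power_mult_distrib algebra_simps)
    qed
    then show ?thesis by (intro quad_zero) blast
  qed
  have sk0: "0 \<le> sk" unfolding sk_def by simp
  obtain uk where nuk: "norm uk = 1" and ouk: "\<forall>j<k. uk \<bullet> u j = 0" and fvk: "f vk = sk *\<^sub>R uk"
    and I3k: "\<And>x. \<forall>j<k. x \<bullet> v j = 0 \<Longrightarrow> x \<bullet> vk = 0 \<Longrightarrow> uk \<bullet> f x = 0"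
  proof (cases "sk = 0")
    case True
    obtain x where x: "norm x = 1" "\<forall>j<k. x \<bullet> u j = 0" using on_extend[OF kB] by blast
    have "f vk = 0" using True unfolding sk_def by simp
    moreover have "f y = 0" if "\<forall>j<k. y \<bullet> v j = 0" for y
      using I2k[of y] that True by simp
    ultimately show ?thesis using that[OF x] True by simp
  next
    case False
    define uk where "uk = f vk /\<^sub>R sk"
    have "norm uk = 1" using False sk0 unfolding uk_def sk_def by simp
    moreover have "\<forall>j<k. uk \<bullet> u j = 0"
    proof (intro allI impI)
      fix j assume "j < k"
      have "\<forall>i\<le>j. vk \<bullet> v i = 0" using ovk \<open>j < k\<close> by auto
      then have "u j \<bullet> f vk = 0" using I \<open>j < k\<close> by blast
      then show "uk \<bullet> u j = 0" unfolding uk_def by (simp add: inner_commute)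
    qed
    moreover have "f vk = sk *\<^sub>R uk" using False unfolding uk_def by simp
    moreover have "uk \<bullet> f x = 0" if "\<forall>j<k. x \<bullet> v j = 0" "x \<bullet> vk = 0" for x
      using FO[OF that] unfolding uk_def by simp
    ultimately show ?thesis using that by blast
  qed
  define s' where "s' = s(k := sk)"
  define u' where "u' = u(k := uk)"
  define v' where "v' = v(k := vk)"
  have "svd_inv f (Suc k) s' u' v'"
    unfolding svd_inv_def
  proof (intro conjI)
    show "orthonormal_upto (Suc k) v'" unfolding v'_def using on_Suc I nvk ovk by blast
    show "orthonormal_upto (Suc k) u'" unfolding u'_def using on_Suc I nuk ouk by blast
    show "\<forall>i<Suc k. 0 \<le> s' i" unfolding s'_def using I sk0 by (auto simp: less_Suc_eq)
    show "\<forall>i. Suc i < Suc k \<longrightarrow> s' (Suc i) \<le> s' i"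
    proof (intro allI impI)
      fix i assume i: "Suc i < Suc k"
      show "s' (Suc i) \<le> s' i"
      proof (cases "Suc i = k")
        case True
        have "\<forall>j<i. vk \<bullet> v j = 0" using ovk True by auto
        then have "norm (f vk) \<le> s i * norm vk" using I True by auto
        then show ?thesis using True nvk unfolding s'_def sk_def by simp
      next
        case False
        then show ?thesis using I i unfolding s'_def by auto
      qed
    qed
    show "\<forall>i<Suc k. f (v' i) = s' i *\<^sub>R u' i"
      unfolding s'_def u'_def v'_def using I fvk by (auto simp: less_Suc_eq)
    show "\<forall>i<Suc k. \<forall>x. (\<forall>j<i. x \<bullet> v' j = 0) \<longrightarrow> norm (f x) \<le> s' i * norm x"
    proof (intro allI impI)
      fix i x assume i: "i < Suc k" and x: "\<forall>j<i. x \<bullet> v' j = 0"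
      show "norm (f x) \<le> s' i * norm x"
      proof (cases "i = k")
        case True
        then show ?thesis using x I2k unfolding s'_def v'_def by auto
      next
        case False
        then have "i < k" using i by simp
        moreover have "\<forall>j<i. x \<bullet> v j = 0" using x \<open>i < k\<close> unfolding v'_def by auto
        ultimately show ?thesis using I unfolding s'_def by auto
      qed
    qed
    show "\<forall>i<Suc k. \<forall>x. (\<forall>j\<le>i. x \<bullet> v' j = 0) \<longrightarrow> u' i \<bullet> f x = 0"
    proof (intro allI impI)
      fix i x assume i: "i < Suc k" and x: "\<forall>j\<le>i. x \<bullet> v' j = 0"
      show "u' i \<bullet> f x = 0"
      proof (cases "i = k")
        case True
        have "\<forall>j<k. x \<bullet> v j = 0"
        proof (intro allI impI)
          fix j assume j: "j < k"
          then have "x \<bullet> v' j = 0" using x True by simp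
          then show "x \<bullet> v j = 0" using j unfolding v'_def by simp
        qed
        moreover have "x \<bullet> vk = 0" using x True unfolding v'_def by auto
        ultimately show ?thesis using I3k True unfolding u'_def by simp
      next
        case False
        then have "i < k" using i by simp
        moreover have "\<forall>j\<le>i. x \<bullet> v j = 0" using x \<open>i < k\<close> unfolding v'_def by auto
        ultimately show ?thesis using I unfolding u'_def by auto
      qed
    qed
  qed
  then show ?case by blast
qed

lemma on_coeff:
  assumes "orthonormal_upto d w" "j < d"
  shows "(\<Sum>i<d. c i *\<^sub>R w i) \<bullet> w j = c j"
proof -
  have "(\<Sum>i<d. c i *\<^sub>R w i) \<bullet> w j = (\<Sum>i<d. if i = j then c j else 0)"
    unfolding inner_sum_left using assms unfolding orthonormal_upto_def
    by (intro sum.cong refl) auto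
  then show ?thesis using assms(2) by simp
qed

lemma svd_final:
  fixes f :: "'a::euclidean_space \<Rightarrow> 'b::euclidean_space"
  assumes lin: "linear f" and d: "d = min DIM('a) DIM('b)" and inv: "svd_inv f d s u v"
  shows "f x = (\<Sum>i<d. (s i * (v i \<bullet> x)) *\<^sub>R u i)"
proof -
  note I = inv[unfolded svd_inv_def]
  define x' where "x' = x - (\<Sum>i<d. (v i \<bullet> x) *\<^sub>R v i)"
  have ox: "\<forall>j<d. x' \<bullet> v j = 0"
  proof (intro allI impI)
    fix j assume j: "j < d"
    have onv: "orthonormal_upto d v" using I by blast
    have "(\<Sum>i<d. (v i \<bullet> x) *\<^sub>R v i) \<bullet> v j = v j \<bullet> x" using on_coeff[OF onv j, of "\<lambda>i. v i \<bullet> x"] by simp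
    then show "x' \<bullet> v j = 0" unfolding x'_def by (simp only: inner_diff_left) (simp add: inner_commute)
  qed
  have "f x = f x' + (\<Sum>i<d. (v i \<bullet> x) *\<^sub>R f (v i))"
    unfolding x'_def using lin by (simp add: linear_diff linear_sum linear_scale)
  also have "(\<Sum>i<d. (v i \<bullet> x) *\<^sub>R f (v i)) = (\<Sum>i<d. (s i * (v i \<bullet> x)) *\<^sub>R u i)"
    using I by (intro sum.cong refl) (simp add: mult.commute)
  also have "f x' = 0"
  proof (cases "d = DIM('a)")
    case True
    then have "x' = 0" using on_complete[of d v x'] I ox by blast
    then show ?thesis using lin by (simp add: linear_0)
  next
    case False
    then have dB: "d = DIM('b)" using d by linarith
    have "\<forall>k<d. f x' \<bullet> u k = 0"
    proof (intro allI impI)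
      fix k assume "k < d"
      then have "u k \<bullet> f x' = 0" using I ox by auto
      then show "f x' \<bullet> u k = 0" by (simp add: inner_commute)
    qed
    then show ?thesis using on_complete[of d u "f x'"] I dB by blast
  qed
  finally show ?thesis by simp
qed

lemma outer_mult:
  fixes c :: "nat \<Rightarrow> real"
  shows "(\<Sum>k<d. c k *\<^sub>R outer_prod (u k) (v k)) *v x = (\<Sum>k<d. (c k * (v k \<bullet> x)) *\<^sub>R u k)"
proof -
  have "((\<Sum>k<d. c k *\<^sub>R outer_prod (u k) (v k)) *v x) $ i = (\<Sum>k<d. (c k * (v k \<bullet> x)) *\<^sub>R u k) $ i" for i
  proof -
    have "((\<Sum>k<d. c k *\<^sub>R outer_prod (u k) (v k)) *v x) $ i = (\<Sum>j\<in>UNIV. (\<Sum>k<d. c k * (u k $ i * v k $ j)) * x $ j)"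
      by (simp add: matrix_vector_mult_def outer_prod_def sum_component)
    also have "\<dots> = (\<Sum>j\<in>UNIV. \<Sum>k<d. c k * u k $ i * (v k $ j * x $ j))"
      by (simp add: sum_distrib_left sum_distrib_right mult_ac)
    also have "\<dots> = (\<Sum>k<d. \<Sum>j\<in>UNIV. c k * u k $ i * (v k $ j * x $ j))"
      by (rule sum.swap)
    also have "\<dots> = (\<Sum>k<d. c k * u k $ i * (\<Sum>j\<in>UNIV. v k $ j * x $ j))"
      by (simp add: sum_distrib_left)
    also have "\<dots> = (\<Sum>k<d. (c k * (v k \<bullet> x)) *\<^sub>R u k) $ i"
      by (simp add: sum_component inner_vec_def mult_ac)
    finally show ?thesis .
  qed
  then show ?thesis by (simp add: vec_eq_iff)
qed

lemma svd_exists: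
  fixes G :: "real^'n::finite^'m::finite"
  shows "\<exists>s u v. is_thin_svd G s u v"
proof -
  let ?f = "(*v) G"
  have lin: "linear ?f" using matrix_vector_mul_bounded_linear linear_conv_bounded_linear by blast
  define d where "d = min DIM(real^'n) DIM(real^'m)"
  have dd: "min_dim G = d" unfolding min_dim_def d_def by simp
  obtain s u v where inv: "svd_inv ?f d s u v" using svd_build[OF lin, of d] unfolding d_def by auto
  note I = inv[unfolded svd_inv_def]
  have "G = (\<Sum>k<d. s k *\<^sub>R outer_prod (u k) (v k))"
    unfolding matrix_eq outer_mult using svd_final[OF lin d_def inv] by simp
  then have "is_thin_svd G s u v"
    unfolding is_thin_svd_def dd using I unfolding orthonormal_upto_def by (intro conjI) (blast+)
  then show ?thesis by blast
qed


lemma frob_eq_norm: "frob_norm (A :: real^'n::finite^'m::finite) = norm A"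
  unfolding frob_norm_def norm_eq_sqrt_inner inner_vec_def by (simp add: power2_eq_square)

lemma outer_inner: "outer_prod a b \<bullet> outer_prod c e = (a \<bullet> c) * (b \<bullet> e)"
  unfolding outer_prod_def inner_vec_def by (simp add: sum_product mult_ac) (rule sum.swap)

lemma outer_inner_mat: "X \<bullet> outer_prod u v = u \<bullet> (X *v v)"
  unfolding outer_prod_def inner_vec_def matrix_vector_mult_def
  by (simp add: sum_distrib_left mult_ac)

definition clipK :: "real \<Rightarrow> (real^'n::finite^'m::finite) set" where
  "clipK \<tau> = {X. \<forall>x. norm (X *v x) \<le> \<tau> * norm x}"

lemma clipK_convex: "convex (clipK \<tau>)"
  unfolding convex_def clipK_def
proof (intro ballI allI impI, simp only: mem_Collect_eq, intro allI)
  fix X Y :: "real^'n^'m" and a b :: real and x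
  assume X: "\<forall>x. norm (X *v x) \<le> \<tau> * norm x" and Y: "\<forall>x. norm (Y *v x) \<le> \<tau> * norm x"
    and ab: "0 \<le> a" "0 \<le> b" "a + b = 1"
  have "norm ((a *\<^sub>R X + b *\<^sub>R Y) *v x) = norm (a *\<^sub>R (X *v x) + b *\<^sub>R (Y *v x))"
    by (simp add: matrix_vector_mult_add_rdistrib scaleR_matrix_vector_assoc)
  also have "\<dots> \<le> a * norm (X *v x) + b * norm (Y *v x)"
    using ab by (metis abs_of_nonneg norm_scaleR norm_triangle_ineq)
  also have "\<dots> \<le> a * (\<tau> * norm x) + b * (\<tau> * norm x)"
    using ab X Y by (intro add_mono mult_left_mono) auto
  also have "\<dots> = \<tau> * norm x" using ab by (metis distrib_right mult_1)
  finally show "norm ((a *\<^sub>R X + b *\<^sub>R Y) *v x) \<le> \<tau> * norm x" .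
qed

lemma clipK_closed: "closed (clipK \<tau> :: (real^'n::finite^'m::finite) set)"
proof -
  have "clipK \<tau> = (\<Inter>x. {X::real^'n^'m. norm (X *v x) \<le> \<tau> * norm x})"
    unfolding clipK_def by auto
  moreover have "closed {X::real^'n^'m. norm (X *v x) \<le> \<tau> * norm x}" for x
  proof -
    have "continuous_on UNIV (\<lambda>X::real^'n^'m. X *v x)"
      unfolding matrix_vector_mult_def by (intro continuous_intros)
    then show ?thesis
      by (intro closed_Collect_le continuous_on_norm continuous_on_const)
  qed
  ultimately show ?thesis by auto
qed

lemma clip_props:
  fixes G :: "real^'n::finite^'m::finite"
  assumes svd: "is_thin_svd G s u v" and tau: "0 < \<tau>"
  defines "C \<equiv> (\<Sum>k<min_dim G. min (s k) \<tau> *\<^sub>R outer_prod (u k) (v k))"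
  shows "C = closest_point (clipK \<tau>) G"
    and "(norm C)^2 \<le> (norm G)^2" and "(norm C)^2 \<le> real (min_dim G) * \<tau>^2"
proof -
  define d where "d = min_dim G"
  define Ok where "Ok k = outer_prod (u k) (v k)" for k
  define m where "m k = min (s k) \<tau>" for k
  have sv: "(\<forall>k<d. 0 \<le> s k)" "orthonormal_upto d u" "orthonormal_upto d v"
    "G = (\<Sum>k<d. s k *\<^sub>R Ok k)"
    using svd unfolding is_thin_svd_def orthonormal_upto_def d_def Ok_def by auto
  have C: "C = (\<Sum>k<d. m k *\<^sub>R Ok k)" unfolding C_def d_def m_def Ok_def by simp
  have onOk: "orthonormal_upto d Ok"
    using sv(2,3) unfolding orthonormal_upto_def Ok_def outer_inner by auto
  have nC: "(norm C)^2 = (\<Sum>k<d. (m k)^2)"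
    unfolding power2_norm_eq_inner C on_inner_sum[OF onOk] by (simp add: power2_eq_square)
  have nG: "(norm G)^2 = (\<Sum>k<d. (s k)^2)"
    unfolding power2_norm_eq_inner sv(4) on_inner_sum[OF onOk] by (simp add: power2_eq_square)
  show "(norm C)^2 \<le> (norm G)^2" unfolding nC nG
    using sv(1) tau unfolding m_def by (intro sum_mono power_mono) auto
  have "(\<Sum>k<d. (m k)^2) \<le> (\<Sum>k<d. \<tau>^2)"
    using sv(1) tau unfolding m_def by (intro sum_mono power_mono) auto
  then show "(norm C)^2 \<le> real (min_dim G) * \<tau>^2" unfolding nC d_def by simp
  have CK: "C \<in> clipK \<tau>"
    unfolding clipK_def
  proof (simp only: mem_Collect_eq, intro allI)
    fix x :: "real^'n"
    have Cx: "C *v x = (\<Sum>k<d. (m k * (v k \<bullet> x)) *\<^sub>R u k)"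
      unfolding C Ok_def outer_mult ..
    have "(norm (C *v x))^2 = (\<Sum>k<d. (m k * (v k \<bullet> x))^2)"
      unfolding power2_norm_eq_inner Cx on_inner_sum[OF sv(2)] by (simp add: power2_eq_square)
    also have "\<dots> \<le> (\<Sum>k<d. \<tau>^2 * (x \<bullet> v k)^2)"
      using sv(1) tau unfolding m_def
      by (intro sum_mono) (auto simp: power_mult_distrib inner_commute intro!: mult_right_mono power_mono)
    also have "\<dots> = \<tau>^2 * (\<Sum>k<d. (x \<bullet> v k)^2)" by (simp add: sum_distrib_left)
    also have "\<dots> \<le> \<tau>^2 * (norm x)^2"
      using on_bessel[OF sv(3), of x] by (intro mult_left_mono) auto
    also have "\<dots> = (\<tau> * norm x)^2" by (simp add: power_mult_distrib)
    finally show "norm (C *v x) \<le> \<tau> * norm x"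
      using tau by (meson mult_nonneg_nonneg norm_ge_zero order.strict_implies_order power2_le_imp_le)
  qed
  define R where "R = G - C"
  have R: "R = (\<Sum>k<d. (s k - m k) *\<^sub>R Ok k)"
    unfolding R_def sv(4) C by (simp add: sum_subtractf scaleR_diff_left)
  have RC: "R \<bullet> C = (\<Sum>k<d. (s k - m k) * \<tau>)"
    unfolding R C on_inner_sum[OF onOk] unfolding m_def by (intro sum.cong refl) auto
  have RX: "R \<bullet> X \<le> R \<bullet> C" if X: "X \<in> clipK \<tau>" for X
  proof -
    have "R \<bullet> X = (\<Sum>k<d. (s k - m k) * (Ok k \<bullet> X))"
      unfolding R inner_sum_left by simp
    also have "\<dots> \<le> (\<Sum>k<d. (s k - m k) * \<tau>)"
    proof (intro sum_mono mult_left_mono)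
      fix k assume k: "k \<in> {..<d}"
      have nu: "norm (u k) = 1" and nv: "norm (v k) = 1"
        using sv(2,3) k unfolding orthonormal_upto_def by (auto simp: norm_eq_1)
      have "Ok k \<bullet> X = u k \<bullet> (X *v v k)" unfolding Ok_def by (simp add: inner_commute outer_inner_mat)
      also have "\<dots> \<le> norm (u k) * norm (X *v v k)" by (rule Cauchy_Schwarz_ineq2[THEN abs_le_D1])
      also have "\<dots> \<le> \<tau>" using X nu nv unfolding clipK_def by (metis (mono_tags, lifting) mem_Collect_eq mult.right_neutral mult_1)
      finally show "Ok k \<bullet> X \<le> \<tau>" .
      show "0 \<le> s k - m k" unfolding m_def by simp
    qed
    finally show ?thesis unfolding RC .
  qed
  have "\<forall>X\<in>clipK \<tau>. dist G C \<le> dist G X"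
  proof
    fix X :: "real^'n^'m" assume X: "X \<in> clipK \<tau>"
    have "G - X = R + (C - X)" unfolding R_def by simp
    then have "(dist G X)^2 = (norm R)^2 + 2 * (R \<bullet> C - R \<bullet> X) + (norm (C - X))^2"
      unfolding dist_norm power2_norm_eq_inner
      by (simp add: inner_add_left inner_add_right inner_diff_right inner_commute)
    also have "\<dots> \<ge> (norm R)^2" using RX[OF X] by (smt (verit) zero_le_power2)
    finally have "(dist G C)^2 \<le> (dist G X)^2" unfolding R_def dist_norm .
    then show "dist G C \<le> dist G X" by (simp add: power2_le_iff_abs_le)
  qed
  then show "C = closest_point (clipK \<tau>) G"
    using closest_point_unique[OF clipK_convex clipK_closed CK] by blast
qed


lemma spec_clip_facts:
  fixes G :: "real^'n::finite^'m::finite"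
  assumes tau: "0 < \<tau>"
  shows "spec_clip \<tau> G = closest_point (clipK \<tau>) G"
    and "(norm (spec_clip \<tau> G))^2 \<le> (norm G)^2"
    and "(norm (spec_clip \<tau> G))^2 \<le> real (min CARD('m) CARD('n)) * \<tau>^2"
proof -
  let ?P = "\<lambda>C. \<exists>s u v. is_thin_svd G s u v \<and> C = (\<Sum>k<min_dim G. min (s k) \<tau> *\<^sub>R outer_prod (u k) (v k))"
  have "\<exists>C. ?P C" using svd_exists[of G] by blast
  then have "?P (spec_clip \<tau> G)" unfolding spec_clip_def by (rule someI_ex)
  then obtain s u v where svd: "is_thin_svd G s u v"
    and eq: "spec_clip \<tau> G = (\<Sum>k<min_dim G. min (s k) \<tau> *\<^sub>R outer_prod (u k) (v k))" by blast
  note cp = clip_props[OF svd tau]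
  show "spec_clip \<tau> G = closest_point (clipK \<tau>) G" using cp(1) eq by simp
  show "(norm (spec_clip \<tau> G))^2 \<le> (norm G)^2" using cp(2) eq by simp
  show "(norm (spec_clip \<tau> G))^2 \<le> real (min CARD('m) CARD('n)) * \<tau>^2"
    using cp(3) eq by (simp add: min_dim_def)
qed

lemma min_geo:
  fixes a b \<theta> :: real
  assumes "0 \<le> a" "0 < b" "0 < \<theta>" "\<theta> \<le> 1"
  shows "min a b \<le> a powr \<theta> * b powr (1 - \<theta>)"
proof (cases "a \<le> b")
  case True
  show ?thesis
  proof (cases "a = 0")
    case True then show ?thesis by simp
  next
    case False
    then have "a = a powr \<theta> * a powr (1 - \<theta>)" using assms by (simp add: powr_add[symmetric])
    also have "\<dots> \<le> a powr \<theta> * b powr (1 - \<theta>)"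
      using assms True by (intro mult_left_mono powr_mono2) auto
    finally show ?thesis using True by simp
  qed
next
  case False
  have "b = b powr \<theta> * b powr (1 - \<theta>)" using assms by (simp add: powr_add[symmetric])
  also have "\<dots> \<le> a powr \<theta> * b powr (1 - \<theta>)"
    using assms False by (intro mult_right_mono powr_mono2) auto
  finally show ?thesis using False by simp
qed

theorem mainTheorem4:
  fixes P :: "'a measure"
    and G :: "'a \<Rightarrow> real^'n::finite^'m::finite"
    and Mm :: "real^'n^'m"
    and \<alpha> \<sigma> \<tau> :: real
  assumes "prob_space P"
    and "G \<in> borel_measurable P"
    and "integrable P G"
    and "integral\<^sup>L P G = Mm"
    and "1 < \<alpha>" and "\<alpha> \<le> 2" and "0 < \<sigma>" and "0 < \<tau>"
    and "integrable P (\<lambda>\<omega>. frob_norm (G \<omega> - Mm) powr \<alpha>)"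
    and "integral\<^sup>L P (\<lambda>\<omega>. frob_norm (G \<omega> - Mm) powr \<alpha>) \<le> \<sigma> powr \<alpha>"
  shows "integrable P (\<lambda>\<omega>. (frob_norm (spec_clip \<tau> (G \<omega>)))\<^sup>2) \<and>
         integral\<^sup>L P (\<lambda>\<omega>. (frob_norm (spec_clip \<tau> (G \<omega>)))\<^sup>2)
           \<le> 2 * (frob_norm Mm)\<^sup>2
             + 2 powr (4 - \<alpha>) * real (min CARD('m) CARD('n)) powr (1 - \<alpha> / 2)
               * \<tau> powr (2 - \<alpha>) * \<sigma> powr \<alpha>"
proof -
  interpret prob_space P by fact
  let ?d = "real (min CARD('m) CARD('n))"
  let ?K = "clipK \<tau> :: (real^'n^'m) set"
  define h where "h \<omega> = (frob_norm (spec_clip \<tau> (G \<omega>)))\<^sup>2" for \<omega>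
  have hform: "h \<omega> = (norm (closest_point ?K (G \<omega>)))^2" for \<omega>
    unfolding h_def frob_eq_norm spec_clip_facts(1)[OF assms(8)] ..
  have cont: "continuous_on UNIV (\<lambda>A. (norm (closest_point ?K A))^2)"
    by (intro continuous_intros continuous_on_closest_point clipK_convex clipK_closed)
       (use assms(8) in \<open>auto simp: clipK_def intro!: exI[where x=0]\<close>)
  have hmeas: "h \<in> borel_measurable P"
    unfolding hform by (rule borel_measurable_continuous_on[OF cont assms(2)])
  have dpos: "?d > 0" by simp
  have hbound: "h \<omega> \<le> ?d * \<tau>^2" and hG: "h \<omega> \<le> (norm (G \<omega>))^2" and h0: "0 \<le> h \<omega>" for \<omega>
    unfolding h_def frob_eq_norm using spec_clip_facts[OF assms(8), of "G \<omega>"] by auto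
  have hint: "integrable P h"
    by (rule integrable_const_bound[where B="?d * \<tau>^2"]) (use hbound h0 hmeas in auto)
  define c where "c = 2 powr (\<alpha>/2) * ?d powr (1 - \<alpha>/2) * \<tau> powr (2 - \<alpha>)"
  define f where "f \<omega> = frob_norm (G \<omega> - Mm) powr \<alpha>" for \<omega>
  have c0: "0 \<le> c" unfolding c_def by simp
  have pw: "h \<omega> \<le> 2 * (norm Mm)^2 + c * f \<omega>" for \<omega>
  proof -
    define n where "n = norm (G \<omega> - Mm)"
    have n0: "0 \<le> n" unfolding n_def by simp
    have "norm (G \<omega>) \<le> norm Mm + n" unfolding n_def by (metis add.commute diff_add_cancel norm_triangle_ineq)
    then have "(norm (G \<omega>))^2 \<le> (norm Mm + n)^2" by (simp add: power_mono)
    also have "\<dots> \<le> 2 * (norm Mm)^2 + 2 * n^2"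
      by (smt (verit) sum_squares_bound power2_sum zero_le_power2 power2_diff)
    finally have G2: "(norm (G \<omega>))^2 \<le> 2 * (norm Mm)^2 + 2 * n^2" .
    have s1: "h \<omega> \<le> 2 * (norm Mm)^2 + min (2 * n^2) (?d * \<tau>^2)"
      using hbound[of \<omega>] hG[of \<omega>] G2 by (smt (verit) zero_le_power2 norm_ge_zero)
    have s2: "min (2 * n^2) (?d * \<tau>^2) \<le> (2 * n^2) powr (\<alpha>/2) * (?d * \<tau>^2) powr (1 - \<alpha>/2)"
      using assms(5,6,8) by (intro min_geo) auto
    have n2: "n^2 = n powr 2" using n0 by simp
    have "(n^2) powr (\<alpha>/2) = n powr \<alpha>" unfolding n2 powr_powr by simp
    then have s3: "(2 * n^2) powr (\<alpha>/2) = 2 powr (\<alpha>/2) * n powr \<alpha>"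
      by (simp add: powr_mult)
    have t2: "\<tau>^2 = \<tau> powr 2" using assms(8) by simp
    have "(\<tau>^2) powr (1 - \<alpha>/2) = \<tau> powr (2 - \<alpha>)" unfolding t2 powr_powr by (simp add: algebra_simps)
    then have s4: "(?d * \<tau>^2) powr (1 - \<alpha>/2) = ?d powr (1 - \<alpha>/2) * \<tau> powr (2 - \<alpha>)"
      by (simp add: powr_mult)
    have "h \<omega> \<le> 2 * (norm Mm)^2 + (2 powr (\<alpha>/2) * n powr \<alpha>) * (?d powr (1 - \<alpha>/2) * \<tau> powr (2 - \<alpha>))"
      using s1 s2 unfolding s3 s4 by linarith
    then show ?thesis unfolding c_def f_def n_def frob_eq_norm by (simp add: mult_ac)
  qed
  have fint: "integrable P f" unfolding f_def by (rule assms(9))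
  have "integral\<^sup>L P h \<le> integral\<^sup>L P (\<lambda>\<omega>. 2 * (norm Mm)^2 + c * f \<omega>)"
    by (rule integral_mono[OF hint]) (use fint pw in auto)
  also have "\<dots> = 2 * (norm Mm)^2 + c * integral\<^sup>L P f"
    using fint by (simp add: prob_space)
  also have "\<dots> \<le> 2 * (norm Mm)^2 + c * \<sigma> powr \<alpha>"
    using assms(10) c0 unfolding f_def by (intro add_left_mono mult_left_mono) auto
  also have "c \<le> 2 powr (4 - \<alpha>) * ?d powr (1 - \<alpha> / 2) * \<tau> powr (2 - \<alpha>)"
    unfolding c_def using assms(5,6) by (intro mult_right_mono powr_mono) auto
  then have "2 * (norm Mm)^2 + c * \<sigma> powr \<alpha> \<le> 2 * (norm Mm)^2 + 2 powr (4 - \<alpha>) * ?d powr (1 - \<alpha> / 2) * \<tau> powr (2 - \<alpha>) * \<sigma> powr \<alpha>"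
    by (intro add_left_mono mult_right_mono) auto
  finally show ?thesis using hint unfolding h_def frob_eq_norm by simp
qed

end
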